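(* Let $\theta:\mathbb{R}^m\to(-\infty,\infty]$ be proper, convex and piecewise linear, let $\bar z\in\operatorname{dom}\partial\theta$, and let $S(\bar z)$ be the linear subspace parallel to the affine hull of $\partial\theta(\bar z)$. Then for every $\bar v\in\partial\theta(\bar z)$, $$\partial^2\theta(\bar z,\bar v)(0)=S(\bar z).$$
   Context: $\theta$ is (convex) piecewise linear if it is convex, proper, and its domain is a union of finitely many polyhedral sets on each of which $\theta$ is affine (equivalently, its epigraph is polyhedral). For convex $\theta$, $\partial\theta$ is the convex-analysis subdifferential. For $\Omega$ and $\bar x\in\Omega$: $\hat N(\bar x;\Omega)=\{v:\limsup_{x\to\bar x,\,x\in\Omega}\langle v,x-\bar x\rangle/\|x-\bar x\|\le0\}$, and the limiting normal cone $N(\bar x;\Omega)$ = limits of $v_k\in\hat N(x_k;\Omega)$, $x_k\to\bar x$ in $\Omega$. Coderivative: $D^*F(\bar x,\bar y)(v)=\{u:(u,-v)\in N((\bar x,\bar y);\operatorname{gph}F)\}$. Second-order subdifferential: $\partial^2\theta(\bar z,\bar v)(u):=D^*(\partial\theta)(\bar z,\bar v)(u)$. *)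

theory Defs
  imports "HOL-Analysis.Analysis" "HOL-Library.Extended_Real"
begin

definition edom :: "('a \<Rightarrow> ereal) \<Rightarrow> 'a set" where
  "edom \<theta> = {x. \<theta> x < \<infinity>}"

definition proper_fun :: "('a \<Rightarrow> ereal) \<Rightarrow> bool" where
  "proper_fun \<theta> \<longleftrightarrow> (\<forall>x. \<theta> x \<noteq> -\<infinity>) \<and> (\<exists>x. \<theta> x \<noteq> \<infinity>)"

definition convex_efun :: "('a::real_vector \<Rightarrow> ereal) \<Rightarrow> bool" where
  "convex_efun \<theta> \<longleftrightarrow> convex {(x, t::real). \<theta> x \<le> ereal t}"

definition piecewise_linear :: "('a::euclidean_space \<Rightarrow> ereal) \<Rightarrow> bool" where
  "piecewise_linear \<theta> \<longleftrightarrow> convex_efun \<theta> \<and> proper_fun \<theta> \<and>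
     (\<exists>P. finite P \<and> edom \<theta> = \<Union>P \<and>
        (\<forall>C\<in>P. polyhedron C \<and> (\<exists>a b. \<forall>x\<in>C. \<theta> x = ereal (a \<bullet> x + b))))"

definition subdiff :: "('a::real_inner \<Rightarrow> ereal) \<Rightarrow> 'a \<Rightarrow> 'a set" where
  "subdiff \<theta> z = {v. \<bar>\<theta> z\<bar> \<noteq> \<infinity> \<and>
      (\<forall>x. \<theta> z + ereal (v \<bullet> (x - z)) \<le> \<theta> x)}"

definition dom_subdiff :: "('a::real_inner \<Rightarrow> ereal) \<Rightarrow> 'a set" where
  "dom_subdiff \<theta> = {z. subdiff \<theta> z \<noteq> {}}"

definition regular_normal :: "'a::real_inner set \<Rightarrow> 'a \<Rightarrow> 'a set" where
  "regular_normal \<Omega> xb = {v. xb \<in> \<Omega> \<and>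
      (\<forall>e>0. \<exists>d>0. \<forall>x\<in>\<Omega>. norm (x - xb) < d \<longrightarrow> v \<bullet> (x - xb) \<le> e * norm (x - xb))}"

definition limiting_normal :: "'a::real_inner set \<Rightarrow> 'a \<Rightarrow> 'a set" where
  "limiting_normal \<Omega> xb = {v. xb \<in> \<Omega> \<and> (\<exists>xs vs. (\<forall>k. xs k \<in> \<Omega> \<and> vs k \<in> regular_normal \<Omega> (xs k))
      \<and> xs \<longlonglongrightarrow> xb \<and> vs \<longlonglongrightarrow> v)}"

definition coderiv :: "('a::real_inner \<Rightarrow> 'b::real_inner set) \<Rightarrow> 'a \<Rightarrow> 'b \<Rightarrow> 'b \<Rightarrow> 'a set" where
  "coderiv F xb yb v = {u. (u, -v) \<in> limiting_normal {(x, y). y \<in> F x} (xb, yb)}"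

definition second_subdiff :: "('a::real_inner \<Rightarrow> ereal) \<Rightarrow> 'a \<Rightarrow> 'a \<Rightarrow> 'a \<Rightarrow> 'a set" where
  "second_subdiff \<theta> zb vb u = coderiv (subdiff \<theta>) zb vb u"

definition parallel_subspace :: "'a::real_vector set \<Rightarrow> 'a set" where
  "parallel_subspace A = {x - y | x y. x \<in> affine hull A \<and> y \<in> affine hull A}"

end

theory Submission
  imports Defs
begin

lemma fin_delta:
  assumes "finite F" "\<And>C. C\<in>F \<Longrightarrow> \<exists>\<delta>>0. \<forall>h::'a::real_normed_vector. norm h < \<delta> \<longrightarrow> R C h"
  shows "\<exists>\<delta>>0. \<forall>C\<in>F. \<forall>h. norm h < \<delta> \<longrightarrow> R C h"
  using assms
proof (induction F rule: finite_induct)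
  case empty then show ?case by (auto intro: exI[of _ 1])
next
  case (insert C F)
  then obtain d1 where d1: "d1>0" "\<forall>h. norm h < d1 \<longrightarrow> R C h" by blast
  from insert obtain d2 where d2: "d2>0" "\<forall>C\<in>F. \<forall>h. norm h < d2 \<longrightarrow> R C h" by blast
  show ?case using d1 d2 by (intro exI[of _ "min d1 d2"]) auto
qed

lemma hs_cone:
  fixes a zb :: "'a::euclidean_space"
  assumes "a \<bullet> zb \<le> b"
  shows "\<exists>\<delta>>0. \<forall>h. norm h < \<delta> \<longrightarrow> (\<forall>s::real. 0<s \<longrightarrow> s\<le>1 \<longrightarrow> (a \<bullet> (zb + s *\<^sub>R h) \<le> b \<longleftrightarrow> a \<bullet> (zb+h) \<le> b))"
proof (cases "a \<bullet> zb = b")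
  case True
  have "a \<bullet> (zb + s *\<^sub>R h) \<le> b \<longleftrightarrow> a \<bullet> (zb+h) \<le> b" if "0<s" for s h
    using True that by (simp add: inner_add_right mult_le_0_iff)
  then show ?thesis by (intro exI[of _ 1]) auto
next
  case False
  define d where "d = (b - a \<bullet> zb) / (norm a + 1)"
  have dpos: "d > 0" using False assms unfolding d_def by (smt (verit) divide_pos_pos norm_ge_zero)
  have key: "a \<bullet> (zb + s *\<^sub>R h) < b" if "norm h < d" "0 < s" "s \<le> 1" for s h
  proof -
    have "a \<bullet> (s *\<^sub>R h) \<le> norm a * norm (s *\<^sub>R h)" by (rule norm_cauchy_schwarz)
    also have "\<dots> \<le> norm a * norm h" using that by (intro mult_left_mono) (auto simp: mult_left_le_one_le)
    also have "\<dots> \<le> norm a * d" using that by (simp add: mult_left_mono)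
    also have "\<dots> < (norm a + 1) * d" using dpos by simp
    also have "\<dots> = b - a \<bullet> zb" 
    proof -
      have "norm a + 1 \<noteq> 0" using norm_ge_zero[of a] by linarith
      then show ?thesis unfolding d_def by simp
    qed
    finally show ?thesis by (simp add: inner_add_right)
  qed
  show ?thesis
    using key[of _ 1] key dpos by (intro exI[of _ d]) (auto simp: less_imp_le)
qed

lemma poly_cone:
  fixes zb :: "'a::euclidean_space"
  assumes "polyhedron C" "zb \<in> C"
  shows "\<exists>\<delta>>0. \<forall>h. norm h < \<delta> \<longrightarrow> (\<forall>s::real. 0<s \<longrightarrow> s\<le>1 \<longrightarrow> (zb + s *\<^sub>R h \<in> C \<longleftrightarrow> zb+h \<in> C))"
proof -
  obtain F where F: "finite F" "C = \<Inter>F" "\<forall>H\<in>F. \<exists>a b. a \<noteq> 0 \<and> H = {x. a \<bullet> x \<le> b}"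
    using assms(1) unfolding polyhedron_def by blast
  have "\<exists>\<delta>>0. \<forall>H\<in>F. \<forall>h. norm h < \<delta> \<longrightarrow> (\<forall>s::real. 0<s \<longrightarrow> s\<le>1 \<longrightarrow> (zb + s *\<^sub>R h \<in> H \<longleftrightarrow> zb+h \<in> H))"
  proof (rule fin_delta[OF F(1)])
    fix H assume H: "H \<in> F"
    then obtain a b where ab: "H = {x. a \<bullet> x \<le> b}" using F by blast
    have "a \<bullet> zb \<le> b" using H ab F(2) assms(2) by auto
    from hs_cone[OF this] show "\<exists>\<delta>>0. \<forall>h. norm h < \<delta> \<longrightarrow> (\<forall>s::real. 0<s \<longrightarrow> s\<le>1 \<longrightarrow> (zb + s *\<^sub>R h \<in> H \<longleftrightarrow> zb+h \<in> H))"
      using ab by simp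
  qed
  then obtain d where d: "d>0" "\<forall>H\<in>F. \<forall>h. norm h < d \<longrightarrow> (\<forall>s::real. 0<s \<longrightarrow> s\<le>1 \<longrightarrow> (zb + s *\<^sub>R h \<in> H \<longleftrightarrow> zb+h \<in> H))" by blast
  show ?thesis
  proof (intro exI[of _ d] conjI allI impI)
    fix h::'a and s::real assume "norm h < d" "0 < s" "s \<le> 1"
    then have "\<forall>H\<in>F. (zb + s *\<^sub>R h \<in> H \<longleftrightarrow> zb+h \<in> H)" using d by blast
    then show "zb + s *\<^sub>R h \<in> C \<longleftrightarrow> zb+h \<in> C" unfolding F(2) by blast
  qed (rule d(1))
qed

lemma far_pt:
  fixes zb :: "'a::real_normed_vector"
  assumes "closed C" "zb \<notin> C"
  shows "\<exists>\<delta>>0. \<forall>h. norm h < \<delta> \<longrightarrow> zb + h \<notin> C"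
proof -
  have "open (- C)" using assms by auto
  then obtain e where "e>0" "ball zb e \<subseteq> - C" using assms(2) open_contains_ball by blast
  have "zb + h \<notin> C" if "norm h < e" for h
  proof -
    have "zb + h \<in> ball zb e" using that by (simp add: dist_norm)
    then show ?thesis using \<open>ball zb e \<subseteq> - C\<close> by blast
  qed
  then show ?thesis using \<open>e>0\<close> by blast
qed


definition Ec :: "('a::real_normed_vector \<Rightarrow> ereal) \<Rightarrow> 'a \<Rightarrow> real \<Rightarrow> real \<Rightarrow> ('a \<times> real) set" where
  "Ec \<theta> zb T \<delta> = {(h,r). \<forall>s>0. s * norm h < \<delta> \<longrightarrow> \<theta> (zb + s *\<^sub>R h) \<le> ereal (T + s*r)}"

lemma subdiffD:
  assumes "v \<in> subdiff \<theta> z"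
  obtains Z where "\<theta> z = ereal Z" "\<And>x. ereal (Z + v \<bullet> (x - z)) \<le> \<theta> x"
proof -
  from assms have fin: "\<bar>\<theta> z\<bar> \<noteq> \<infinity>" and ineq: "\<And>x. \<theta> z + ereal (v \<bullet> (x - z)) \<le> \<theta> x"
    unfolding subdiff_def by auto
  from fin obtain Z where Z: "\<theta> z = ereal Z" by (cases "\<theta> z") auto
  show ?thesis using that[OF Z] ineq Z by simp
qed

lemma subdiffI:
  assumes "\<theta> z = ereal Z" "\<And>x. ereal (Z + v \<bullet> (x - z)) \<le> \<theta> x"
  shows "v \<in> subdiff \<theta> z"
  using assms unfolding subdiff_def by auto

context
  fixes \<theta> :: "'a::euclidean_space \<Rightarrow> ereal" and P :: "'a set set"
    and A :: "'a set \<Rightarrow> 'a" and B :: "'a set \<Rightarrow> real"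
  assumes finP: "finite P" and polyP: "\<forall>C\<in>P. polyhedron C"
    and affP: "\<forall>C\<in>P. \<forall>y\<in>C. \<theta> y = ereal (A C \<bullet> y + B C)"
    and domP: "edom \<theta> = \<Union>P"
    and cvx: "convex_efun \<theta>"
begin

lemma EPI: "\<theta> y \<le> ereal t \<longleftrightarrow> (\<exists>C\<in>P. y \<in> C \<and> A C \<bullet> y + B C \<le> t)"
proof
  assume "\<theta> y \<le> ereal t"
  then have "\<theta> y < \<infinity>" using le_less_trans[of "\<theta> y" "ereal t" \<infinity>] by simp
  then have "y \<in> edom \<theta>" unfolding edom_def by simp
  then obtain C where "C \<in> P" "y \<in> C" using domP by auto
  then show "\<exists>C\<in>P. y \<in> C \<and> A C \<bullet> y + B C \<le> t" using affP \<open>\<theta> y \<le> ereal t\<close> by fastforce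
next
  assume "\<exists>C\<in>P. y \<in> C \<and> A C \<bullet> y + B C \<le> t"
  then show "\<theta> y \<le> ereal t" using affP by fastforce
qed

lemma epi_closed: "closed {p. \<theta> (fst p) \<le> ereal (snd p)}"
proof -
  have eq: "{p. \<theta> (fst p) \<le> ereal (snd p)} = (\<Union>C\<in>P. (fst -` C) \<inter> {p. A C \<bullet> fst p + B C \<le> snd p})"
    using EPI by auto
  have "closed ((fst -` C) \<inter> {p::'a\<times>real. A C \<bullet> fst p + B C \<le> snd p})" if "C \<in> P" for C
  proof (rule closed_Int)
    show "closed (fst -` C :: ('a\<times>real) set)" using polyP that by (simp add: closed_vimage_fst polyhedron_imp_closed)
    show "closed {p::'a\<times>real. A C \<bullet> fst p + B C \<le> snd p}"
      by (rule closed_Collect_le) (intro continuous_intros)+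
  qed
  then show ?thesis unfolding eq using finP by (intro closed_UN) auto
qed

lemma conv:
  assumes "0 \<le> \<mu>" "\<mu> \<le> 1" "\<theta> a \<le> ereal ra" "\<theta> b \<le> ereal rb"
  shows "\<theta> ((1-\<mu>) *\<^sub>R a + \<mu> *\<^sub>R b) \<le> ereal ((1-\<mu>) * ra + \<mu> * rb)"
proof -
  let ?S = "{(x, t::real). \<theta> x \<le> ereal t}"
  have "convex ?S" using cvx unfolding convex_efun_def .
  moreover have "(a, ra) \<in> ?S" "(b, rb) \<in> ?S" using assms by auto
  ultimately have "(1-\<mu>) *\<^sub>R (a, ra) + \<mu> *\<^sub>R (b, rb) \<in> ?S"
    using assms by (intro convexD) auto
  then show ?thesis by simp
qed

lemma hom:
  assumes T: "\<theta> zb = ereal T"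
  shows "\<exists>\<delta>>0. \<forall>h. norm h < \<delta> \<longrightarrow> (\<forall>s r. 0<s \<longrightarrow> s\<le>1 \<longrightarrow>
     (\<theta> (zb + s *\<^sub>R h) \<le> ereal (T + s*r) \<longleftrightarrow> \<theta> (zb + h) \<le> ereal (T + r)))"
proof -
  have "\<exists>\<delta>>0. \<forall>C\<in>P. \<forall>h. norm h < \<delta> \<longrightarrow>
     ((\<forall>s::real. 0<s \<longrightarrow> s\<le>1 \<longrightarrow> (zb + s *\<^sub>R h \<in> C \<longleftrightarrow> zb+h \<in> C)) \<and> (zb + h \<in> C \<longrightarrow> zb \<in> C))"
  proof (rule fin_delta[OF finP])
    fix C assume C: "C \<in> P"
    show "\<exists>\<delta>>0. \<forall>h. norm h < \<delta> \<longrightarrow>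
     ((\<forall>s::real. 0<s \<longrightarrow> s\<le>1 \<longrightarrow> (zb + s *\<^sub>R h \<in> C \<longleftrightarrow> zb+h \<in> C)) \<and> (zb + h \<in> C \<longrightarrow> zb \<in> C))"
    proof (cases "zb \<in> C")
      case True
      then show ?thesis using poly_cone[of C zb] C polyP by auto
    next
      case False
      then obtain d where d: "d>0" "\<forall>h. norm h < d \<longrightarrow> zb + h \<notin> C"
        using far_pt[of C zb] C polyP polyhedron_imp_closed by blast
      have "zb + s *\<^sub>R h \<notin> C" if "norm h < d" "0<s" "s\<le>1" for h and s::real
      proof -
        have "norm (s *\<^sub>R h) < d" using that
          by (smt (verit, best) mult_left_le_one_le norm_ge_zero norm_scaleR)
        then show ?thesis using d by blast
      qed
      then show ?thesis using d False by blast
    qed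
  qed
  then obtain d where d: "d>0" "\<forall>C\<in>P. \<forall>h. norm h < d \<longrightarrow>
     ((\<forall>s::real. 0<s \<longrightarrow> s\<le>1 \<longrightarrow> (zb + s *\<^sub>R h \<in> C \<longleftrightarrow> zb+h \<in> C)) \<and> (zb + h \<in> C \<longrightarrow> zb \<in> C))"
    by blast
  show ?thesis
  proof (intro exI[of _ d] conjI allI impI)
    fix h::'a and s r::real assume h: "norm h < d" and s: "0 < s" "s \<le> 1"
    have inC: "zb + s *\<^sub>R h \<in> C \<longleftrightarrow> zb + h \<in> C" and zbC: "zb + h \<in> C \<Longrightarrow> zb \<in> C" if "C \<in> P" for C
      using d that h s by blast+
    have Tz: "A C \<bullet> zb + B C = T" if "C \<in> P" "zb \<in> C" for C
      using affP that T by auto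
    have "\<theta> (zb + s *\<^sub>R h) \<le> ereal (T + s*r) \<longleftrightarrow> (\<exists>C\<in>P. zb + h \<in> C \<and> A C \<bullet> h \<le> r)"
    proof -
      have "(\<exists>C\<in>P. zb + s *\<^sub>R h \<in> C \<and> A C \<bullet> (zb + s *\<^sub>R h) + B C \<le> T + s*r)
          \<longleftrightarrow> (\<exists>C\<in>P. zb + h \<in> C \<and> A C \<bullet> h \<le> r)"
      proof (intro bex_cong refl)
        fix C assume C: "C \<in> P"
        show "(zb + s *\<^sub>R h \<in> C \<and> A C \<bullet> (zb + s *\<^sub>R h) + B C \<le> T + s*r) \<longleftrightarrow> (zb + h \<in> C \<and> A C \<bullet> h \<le> r)"
        proof (cases "zb + h \<in> C")
          case True
          then have "A C \<bullet> (zb + s *\<^sub>R h) + B C = T + s * (A C \<bullet> h)"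
            using Tz[OF C zbC[OF C True]] by (simp add: inner_add_right algebra_simps)
          then show ?thesis using inC[OF C] True s by simp
        qed (use inC[OF C] in auto)
      qed
      then show ?thesis using EPI by simp
    qed
    moreover have "\<theta> (zb + h) \<le> ereal (T + r) \<longleftrightarrow> (\<exists>C\<in>P. zb + h \<in> C \<and> A C \<bullet> h \<le> r)"
    proof -
      have "(\<exists>C\<in>P. zb + h \<in> C \<and> A C \<bullet> (zb + h) + B C \<le> T + r) \<longleftrightarrow> (\<exists>C\<in>P. zb + h \<in> C \<and> A C \<bullet> h \<le> r)"
      proof (intro bex_cong refl)
        fix C assume C: "C \<in> P"
        show "(zb + h \<in> C \<and> A C \<bullet> (zb + h) + B C \<le> T + r) \<longleftrightarrow> (zb + h \<in> C \<and> A C \<bullet> h \<le> r)"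
        proof (cases "zb + h \<in> C")
          case True
          then have "A C \<bullet> (zb + h) + B C = T + A C \<bullet> h"
            using Tz[OF C zbC[OF C True]] by (simp add: inner_add_right algebra_simps)
          then show ?thesis using True by simp
        qed simp
      qed
      then show ?thesis using EPI by simp
    qed
    ultimately show "\<theta> (zb + s *\<^sub>R h) \<le> ereal (T + s*r) \<longleftrightarrow> \<theta> (zb + h) \<le> ereal (T + r)" by simp
  qed (rule d(1))
qed

context
  fixes zb :: 'a and T :: real and vb :: 'a and \<delta> :: real
  assumes T: "\<theta> zb = ereal T" and vbK: "vb \<in> subdiff \<theta> zb" and dpos: "\<delta> > 0"
    and dhom: "\<forall>h. norm h < \<delta> \<longrightarrow> (\<forall>s r. 0<s \<longrightarrow> s\<le>1 \<longrightarrow>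
     (\<theta> (zb + s *\<^sub>R h) \<le> ereal (T + s*r) \<longleftrightarrow> \<theta> (zb + h) \<le> ereal (T + r)))"
begin

lemma E_closed: "closed (Ec \<theta> zb T \<delta>)"
proof -
  let ?epi = "{p. \<theta> (fst p) \<le> ereal (snd p)}"
  have eq: "Ec \<theta> zb T \<delta> = (\<Inter>s\<in>{0<..}. {p. \<delta> \<le> s * norm (fst p)} \<union> (\<lambda>p. (zb + s *\<^sub>R fst p, T + s * snd p)) -` ?epi)"
    unfolding Ec_def apply (auto simp: not_less) using linorder_not_less by fastforce
  show ?thesis unfolding eq
  proof (intro closed_INT ballI closed_Un)
    fix s :: real
    show "closed {p::'a\<times>real. \<delta> \<le> s * norm (fst p)}"
      by (rule closed_Collect_le) (intro continuous_intros)+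
    show "closed ((\<lambda>p::'a\<times>real. (zb + s *\<^sub>R fst p, T + s * snd p)) -` ?epi)"
      by (rule continuous_closed_vimage[OF epi_closed]) (intro continuous_intros)
  qed
qed

lemma E_cone: assumes "(h,r) \<in> Ec \<theta> zb T \<delta>" "l > 0" shows "(l *\<^sub>R h, l * r) \<in> Ec \<theta> zb T \<delta>"
proof -
  have H: "\<forall>s>0. s * norm h < \<delta> \<longrightarrow> \<theta> (zb + s *\<^sub>R h) \<le> ereal (T + s * r)"
    using assms(1) unfolding Ec_def by simp
  have "\<theta> (zb + s *\<^sub>R (l *\<^sub>R h)) \<le> ereal (T + s * (l * r))" if s: "0 < s" "s * norm (l *\<^sub>R h) < \<delta>" for s
  proof -
    have "(s*l) * norm h < \<delta>" using s assms(2) by (simp add: mult.assoc)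
    then have "\<theta> (zb + (s*l) *\<^sub>R h) \<le> ereal (T + (s*l) * r)"
      using H s assms(2) by simp
    then show ?thesis by (simp add: mult.assoc)
  qed
  then show ?thesis unfolding Ec_def by simp
qed

lemma E_zero: "r \<ge> 0 \<Longrightarrow> (0, r) \<in> Ec \<theta> zb T \<delta>"
  unfolding Ec_def using T by auto

lemma E_mem:
  assumes h: "norm h < \<delta>" and le: "\<theta> (zb + h) \<le> ereal (T + r)"
  shows "(h, r) \<in> Ec \<theta> zb T \<delta>"
  unfolding Ec_def
proof (clarsimp)
  fix s :: real assume s: "0 < s" "s * norm h < \<delta>"
  show "\<theta> (zb + s *\<^sub>R h) \<le> ereal (T + s * r)"
  proof (cases "s \<le> 1")
    case True
    then show ?thesis using dhom h s le by blast
  next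
    case False
    have n: "norm (s *\<^sub>R h) < \<delta>" using s by simp
    have "\<theta> (zb + (1/s) *\<^sub>R (s *\<^sub>R h)) \<le> ereal (T + (1/s) * (s * r)) \<longleftrightarrow> \<theta> (zb + s *\<^sub>R h) \<le> ereal (T + s*r)"
      using dhom n False s by (intro dhom[rule_format]) auto
    then show ?thesis using le s by simp
  qed
qed

lemma E_conv: "convex (Ec \<theta> zb T \<delta>)"
proof (rule convexI)
  fix p q :: "'a \<times> real" and u v :: real
  assume p: "p \<in> Ec \<theta> zb T \<delta>" and q: "q \<in> Ec \<theta> zb T \<delta>" and uv: "0 \<le> u" "0 \<le> v" "u + v = 1"
  obtain h1 r1 where p': "p = (h1, r1)" by (cases p)
  obtain h2 r2 where q': "q = (h2, r2)" by (cases q)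
  have u: "u = 1 - v" using uv by simp
  define h where "h = u *\<^sub>R h1 + v *\<^sub>R h2"
  define r where "r = u * r1 + v * r2"
  have "(h, r) \<in> Ec \<theta> zb T \<delta>"
    unfolding Ec_def
  proof (clarsimp)
    fix s :: real assume s: "0 < s" "s * norm h < \<delta>"
    define s' where "s' = min s (\<delta> / (2 * (norm h1 + norm h2 + 1)))"
    have "2 * (norm h1 + norm h2 + 1) > 0" by (smt (verit) norm_ge_zero)
    then have s'pos: "s' > 0" unfolding s'_def using s dpos
      by (simp add: divide_pos_pos)
    have s'le: "s' \<le> s" unfolding s'_def by simp
    have s'b: "s' * (norm h1 + norm h2 + 1) \<le> \<delta> / 2"
    proof -
      have "s' * (norm h1 + norm h2 + 1) \<le> (\<delta> / (2 * (norm h1 + norm h2 + 1))) * (norm h1 + norm h2 + 1)"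
        unfolding s'_def by (intro mult_right_mono) auto
      also have "\<dots> = \<delta>/2"
      proof -
        have "norm h1 + norm h2 + 1 \<noteq> 0" by (smt (verit) norm_ge_zero)
        then show ?thesis by (simp add: field_simps)
      qed
      finally show ?thesis .
    qed
    have "s' * norm h1 \<le> s' * (norm h1 + norm h2 + 1)" using s'pos by (intro mult_left_mono) auto
    then have n1: "s' * norm h1 < \<delta>" using s'b dpos by linarith
    have "s' * norm h2 \<le> s' * (norm h1 + norm h2 + 1)" using s'pos by (intro mult_left_mono) auto
    then have n2: "s' * norm h2 < \<delta>" using s'b dpos by linarith
    have i1: "\<theta> (zb + s' *\<^sub>R h1) \<le> ereal (T + s' * r1)" using p p' n1 s'pos unfolding Ec_def by auto
    have i2: "\<theta> (zb + s' *\<^sub>R h2) \<le> ereal (T + s' * r2)" using q q' n2 s'pos unfolding Ec_def by auto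
    have "\<theta> ((1-v) *\<^sub>R (zb + s' *\<^sub>R h1) + v *\<^sub>R (zb + s' *\<^sub>R h2)) \<le> ereal ((1-v) * (T + s' * r1) + v * (T + s' * r2))"
      using conv[OF _ _ i1 i2, of v] uv by auto
    moreover have "(1-v) *\<^sub>R (zb + s' *\<^sub>R h1) + v *\<^sub>R (zb + s' *\<^sub>R h2) = zb + s' *\<^sub>R h"
      unfolding h_def u by (simp add: algebra_simps)
    moreover have "(1-v) * (T + s' * r1) + v * (T + s' * r2) = T + s' * r"
      unfolding r_def u by (simp add: algebra_simps)
    ultimately have i: "\<theta> (zb + s' *\<^sub>R h) \<le> ereal (T + s' * r)" by simp
    have n: "norm (s *\<^sub>R h) < \<delta>" using s by simp
    have "\<theta> (zb + (s'/s) *\<^sub>R (s *\<^sub>R h)) \<le> ereal (T + (s'/s) * (s * r)) \<longleftrightarrow> \<theta> (zb + s *\<^sub>R h) \<le> ereal (T + s*r)"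
      using s'pos s'le s n by (intro dhom[rule_format]) auto
    then show "\<theta> (zb + s *\<^sub>R h) \<le> ereal (T + s * r)" using i s by simp
  qed
  then show "u *\<^sub>R p + v *\<^sub>R q \<in> Ec \<theta> zb T \<delta>"
    unfolding p' q' h_def r_def by simp
qed

lemma LG:
  assumes loc: "\<And>h. norm h < \<delta> \<Longrightarrow> ereal (T + w \<bullet> h) \<le> \<theta> (zb + h)"
  shows "w \<in> subdiff \<theta> zb"
proof (rule subdiffI[where Z=T and \<theta>=\<theta> and z=zb, OF T])
  fix y
  obtain Tb where Tb: "\<theta> zb = ereal Tb" "\<And>x. ereal (Tb + vb \<bullet> (x - zb)) \<le> \<theta> x"
    using subdiffD[OF vbK] by blast
  show "ereal (T + w \<bullet> (y - zb)) \<le> \<theta> y"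
  proof (cases "\<theta> y = \<infinity>")
    case True then show ?thesis by simp
  next
    case False
    have "\<theta> y \<noteq> -\<infinity>" using Tb(2)[of y] by auto
    with False obtain Y where Y: "\<theta> y = ereal Y" by (cases "\<theta> y") auto
    define e where "e = min 1 (\<delta> / (2 * (norm (y - zb) + 1)))"
    have pos: "2 * (norm (y - zb) + 1) > 0" by (smt (verit) norm_ge_zero)
    then have epos: "e > 0" unfolding e_def using dpos by (simp add: divide_pos_pos)
    have e1: "e \<le> 1" unfolding e_def by simp
    have "e * norm (y - zb) \<le> e * (norm (y - zb) + 1)" using epos by (intro mult_left_mono) auto
    also have "\<dots> \<le> (\<delta> / (2 * (norm (y - zb) + 1))) * (norm (y - zb) + 1)"
      unfolding e_def by (intro mult_right_mono) auto
    also have "\<dots> = \<delta> / 2" using pos by (simp add: field_simps)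
    finally have nh: "norm (e *\<^sub>R (y - zb)) < \<delta>" using epos dpos by simp
    have "\<theta> ((1-e) *\<^sub>R zb + e *\<^sub>R y) \<le> ereal ((1-e) * T + e * Y)"
      using conv[of e zb T y Y] epos e1 T Y by simp
    moreover have "(1-e) *\<^sub>R zb + e *\<^sub>R y = zb + e *\<^sub>R (y - zb)" by (simp add: algebra_simps)
    ultimately have A: "\<theta> (zb + e *\<^sub>R (y - zb)) \<le> ereal ((1-e) * T + e * Y)" by simp
    have "ereal (T + w \<bullet> (e *\<^sub>R (y - zb))) \<le> ereal ((1-e) * T + e * Y)"
      using order.trans[OF loc[OF nh] A] .
    then have "T + e * (w \<bullet> (y - zb)) \<le> (1-e) * T + e * Y" by simp
    then have "e * (T + w \<bullet> (y - zb)) \<le> e * Y" by (simp add: algebra_simps)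
    then have "T + w \<bullet> (y - zb) \<le> Y" using epos by simp
    then show ?thesis using Y by simp
  qed
qed

lemma GoalB:
  assumes W: "\<forall>v\<in>subdiff \<theta> zb. (v - vb) \<bullet> x = 0"
  shows "(x, vb \<bullet> x) \<in> Ec \<theta> zb T \<delta>"
proof (rule ccontr)
  let ?E = "Ec \<theta> zb T \<delta>"
  assume nE: "(x, vb \<bullet> x) \<notin> ?E"
  obtain a \<beta> where sep: "inner a (x, vb \<bullet> x) < \<beta>" "\<forall>p\<in>?E. inner a p > \<beta>"
    using separating_hyperplane_closed_point[OF E_conv E_closed nE] by blast
  obtain a1 \<alpha> where a: "a = (a1, \<alpha>)" by (cases a)
  have b0: "\<beta> < 0" using sep(2) E_zero[of 0] by (auto simp: a)
  have nonneg: "a1 \<bullet> h + \<alpha> * r \<ge> 0" if "(h, r) \<in> ?E" for h r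
  proof (rule ccontr)
    assume neg: "\<not> a1 \<bullet> h + \<alpha> * r \<ge> 0"
    define l where "l = \<beta> / (a1 \<bullet> h + \<alpha> * r)"
    have lpos: "l > 0" unfolding l_def using neg b0 by (simp add: divide_neg_neg)
    have "(l *\<^sub>R h, l * r) \<in> ?E" by (rule E_cone[OF that lpos])
    then have "a1 \<bullet> (l *\<^sub>R h) + \<alpha> * (l * r) > \<beta>" using sep(2) by (auto simp: a)
    moreover have "a1 \<bullet> (l *\<^sub>R h) + \<alpha> * (l * r) = l * (a1 \<bullet> h + \<alpha> * r)" by (simp add: algebra_simps)
    moreover have "l * (a1 \<bullet> h + \<alpha> * r) = \<beta>" unfolding l_def using neg by simp
    ultimately show False by simp
  qed
  have alpha: "\<alpha> \<ge> 0" using nonneg[OF E_zero[of 1]] by simp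
  obtain Tb where Tb: "\<theta> zb = ereal Tb" "\<And>y. ereal (Tb + vb \<bullet> (y - zb)) \<le> \<theta> y"
    using subdiffD[OF vbK] by blast
  have TT: "Tb = T" using Tb(1) T by simp
  define w where "w = (if \<alpha> > 0 then - (1/\<alpha>) *\<^sub>R a1 else vb - a1)"
  have "w \<in> subdiff \<theta> zb"
  proof (rule LG)
    fix h :: 'a assume h: "norm h < \<delta>"
    show "ereal (T + w \<bullet> h) \<le> \<theta> (zb + h)"
    proof (cases "\<theta> (zb + h) = \<infinity>")
      case True then show ?thesis by simp
    next
      case False
      have lb: "ereal (T + vb \<bullet> h) \<le> \<theta> (zb + h)" using Tb(2)[of "zb + h"] TT by simp
      then have "\<theta> (zb + h) \<noteq> -\<infinity>" by auto
      with False obtain R where R: "\<theta> (zb + h) = ereal R" by (cases "\<theta> (zb + h)") auto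
      have "(h, R - T) \<in> ?E" using E_mem[OF h] R by simp
      from nonneg[OF this] have nn: "a1 \<bullet> h + \<alpha> * (R - T) \<ge> 0" .
      show ?thesis
      proof (cases "\<alpha> > 0")
        case True
        have "- (a1 \<bullet> h) / \<alpha> \<le> R - T" using nn True by (simp add: field_simps)
        then have "T + w \<bullet> h \<le> R" unfolding w_def using True by (simp add: field_simps)
        then show ?thesis using R by simp
      next
        case False
        then have "\<alpha> = 0" using alpha by simp
        then have "a1 \<bullet> h \<ge> 0" using nn by simp
        moreover have "T + vb \<bullet> h \<le> R" using lb R by simp
        ultimately have "T + w \<bullet> h \<le> R" unfolding w_def using False by (simp add: inner_diff_left)
        then show ?thesis using R by simp
      qed
    qed
  qed
  then have wx: "(w - vb) \<bullet> x = 0" using W by blast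
  have ax: "a1 \<bullet> x + \<alpha> * (vb \<bullet> x) < 0" using sep(1) b0 by (simp add: a)
  show False
  proof (cases "\<alpha> > 0")
    case True
    then have "- (1/\<alpha>) * (a1 \<bullet> x) = vb \<bullet> x" using wx unfolding w_def by (simp add: inner_diff_left)
    then have "a1 \<bullet> x + \<alpha> * (vb \<bullet> x) = 0" using True by (simp add: field_simps)
    then show False using ax by simp
  next
    case False
    then have "\<alpha> = 0" using alpha by simp
    moreover have "a1 \<bullet> x = 0" using wx False unfolding w_def by (simp add: inner_diff_left)
    ultimately show False using ax by simp
  qed
qed

lemma KL:
  assumes W: "\<forall>v\<in>subdiff \<theta> zb. (v - vb) \<bullet> x = 0"
  shows "\<exists>\<eta>>0. \<forall>z v t. v \<in> subdiff \<theta> z \<longrightarrow> norm (z - zb) < \<eta> \<longrightarrow> 0 < t \<longrightarrow> t < \<eta> \<longrightarrow> v \<in> subdiff \<theta> (z + t *\<^sub>R x)"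
proof -
  define \<eta> where "\<eta> = \<delta> / (2 * (norm x + 1))"
  have pos: "2 * (norm x + 1) > 0" by (smt (verit) norm_ge_zero)
  then have epos: "\<eta> > 0" unfolding \<eta>_def using dpos by (simp add: divide_pos_pos)
  have eta2: "\<eta> * (2 * (norm x + 1)) = \<delta>" unfolding \<eta>_def using pos by simp
  have B: "(x, vb \<bullet> x) \<in> Ec \<theta> zb T \<delta>" by (rule GoalB[OF W])
  have "v \<in> subdiff \<theta> (z + t *\<^sub>R x)" if v: "v \<in> subdiff \<theta> z" and zn: "norm (z - zb) < \<eta>" and t: "0 < t" "t < \<eta>" for z v t
  proof -
    obtain Z where Z: "\<theta> z = ereal Z" "\<And>y. ereal (Z + v \<bullet> (y - z)) \<le> \<theta> y"
      using subdiffD[OF v] by blast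
    define h where "h = z - zb"
    have zh: "z = zb + h" unfolding h_def by simp
    have "\<eta> \<le> \<delta> / 2"
    proof -
      have "\<eta> * 2 \<le> \<eta> * (2 * (norm x + 1))" using epos by (intro mult_left_mono) auto
      then show ?thesis using eta2 by simp
    qed
    then have n2h: "norm (2 *\<^sub>R h) < \<delta>" using zn unfolding h_def by simp
    have "\<theta> (zb + (1/2) *\<^sub>R (2 *\<^sub>R h)) \<le> ereal (T + (1/2) * (2 * (Z - T))) \<longleftrightarrow> \<theta> (zb + 2 *\<^sub>R h) \<le> ereal (T + 2 * (Z - T))"
      using dhom n2h by (intro dhom[rule_format]) auto
    moreover have "T + (1/2) * (2 * (Z - T)) = Z" by (simp add: field_simps)
    moreover have "zb + (1/2) *\<^sub>R (2 *\<^sub>R h) = z" using zh by simp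
    ultimately have t2h: "\<theta> (zb + 2 *\<^sub>R h) \<le> ereal (T + 2 * (Z - T))" using Z(1) by simp
    have "ereal (Z + v \<bullet> h) \<le> \<theta> (zb + 2 *\<^sub>R h)" using Z(2)[of "zb + 2 *\<^sub>R h"] zh
      by (simp add: algebra_simps scaleR_2)
    then have "ereal (Z + v \<bullet> h) \<le> ereal (T + 2 * (Z - T))" using t2h by (rule order.trans)
    then have s1: "T + v \<bullet> h \<le> Z" by simp
    have "v \<in> subdiff \<theta> zb"
    proof (rule subdiffI[where Z=T and \<theta>=\<theta> and z=zb, OF T])
      fix y
      have "T + v \<bullet> (y - zb) \<le> Z + v \<bullet> (y - z)" using s1 zh by (simp add: inner_diff_right inner_add_right)
      then show "ereal (T + v \<bullet> (y - zb)) \<le> \<theta> y" using Z(2)[of y] by (meson ereal_less_eq(3) order.trans)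
    qed
    then have vx: "v \<bullet> x = vb \<bullet> x" using W by (simp add: inner_diff_left)
    have "2 * t * norm x < \<delta>"
    proof -
      have "2 * t * norm x \<le> 2 * t * (norm x + 1)" using t by simp
      also have "\<dots> < 2 * \<eta> * (norm x + 1)" using t by (intro mult_strict_right_mono) (auto simp: add_pos_nonneg, smt (verit) norm_ge_zero)
      also have "\<dots> = \<delta>" using eta2 by (simp add: algebra_simps)
      finally show ?thesis .
    qed
    then have t2x: "\<theta> (zb + (2*t) *\<^sub>R x) \<le> ereal (T + (2*t) * (vb \<bullet> x))"
      using B t unfolding Ec_def by simp
    have "\<theta> ((1 - 1/2) *\<^sub>R (zb + 2 *\<^sub>R h) + (1/2) *\<^sub>R (zb + (2*t) *\<^sub>R x)) \<le> ereal ((1 - 1/2) * (T + 2 * (Z - T)) + (1/2) * (T + (2*t) * (vb \<bullet> x)))"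
      by (rule conv[OF _ _ t2h t2x]) auto
    moreover have "(1 - 1/2) *\<^sub>R (zb + 2 *\<^sub>R h) + (1/2) *\<^sub>R (zb + (2*t) *\<^sub>R x) = z + t *\<^sub>R x"
    proof -
      have hz: "(1/2) *\<^sub>R zb + (1/2) *\<^sub>R zb = zb" by (simp flip: scaleR_add_left)
      have "(1 - 1/2) *\<^sub>R (zb + 2 *\<^sub>R h) + (1/2) *\<^sub>R (zb + (2*t) *\<^sub>R x)
          = ((1/2) *\<^sub>R zb + (1/2) *\<^sub>R zb) + h + t *\<^sub>R x" by (simp add: scaleR_add_right)
      then show ?thesis using hz zh by (simp add: algebra_simps)
    qed
    moreover have "(1 - 1/2) * (T + 2 * (Z - T)) + (1/2) * (T + (2*t) * (vb \<bullet> x)) = Z + t * (v \<bullet> x)"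
      using vx by (simp add: algebra_simps)
    ultimately have up: "\<theta> (z + t *\<^sub>R x) \<le> ereal (Z + t * (v \<bullet> x))" by simp
    have lo: "ereal (Z + t * (v \<bullet> x)) \<le> \<theta> (z + t *\<^sub>R x)" using Z(2)[of "z + t *\<^sub>R x"] by simp
    have eq: "\<theta> (z + t *\<^sub>R x) = ereal (Z + t * (v \<bullet> x))" using up lo by simp
    show ?thesis
    proof (rule subdiffI[where \<theta>=\<theta>, OF eq])
      fix y
      have "Z + t * (v \<bullet> x) + v \<bullet> (y - (z + t *\<^sub>R x)) = Z + v \<bullet> (y - z)"
        by (simp add: inner_diff_right inner_add_right)
      then show "ereal (Z + t * (v \<bullet> x) + v \<bullet> (y - (z + t *\<^sub>R x))) \<le> \<theta> y" using Z(2)[of y] by (simp add: add.assoc)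
    qed
  qed
  then show ?thesis using epos by blast
qed

lemma reg_dir:
  assumes rn: "q \<in> regular_normal G p0" and pin: "\<And>t. 0 < t \<Longrightarrow> t < \<eta> \<Longrightarrow> p0 + t *\<^sub>R d \<in> G" and eta: "\<eta> > 0"
  shows "q \<bullet> d \<le> 0"
proof -
  have "q \<bullet> d \<le> e" if e: "e > 0" for e
  proof -
    define e' where "e' = e / (norm d + 1)"
    have nd: "norm d + 1 > 0" by (smt (verit) norm_ge_zero)
    have e'pos: "e' > 0" unfolding e'_def using e nd by simp
    obtain dd where dd: "dd > 0" "\<forall>x\<in>G. norm (x - p0) < dd \<longrightarrow> q \<bullet> (x - p0) \<le> e' * norm (x - p0)"
      using rn e'pos unfolding regular_normal_def by blast
    define t where "t = min (\<eta>/2) (dd / (2 * (norm d + 1)))"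
    have tpos: "t > 0" unfolding t_def using eta dd nd by simp
    have tlt: "t < \<eta>" unfolding t_def using eta by simp
    have "t * norm d \<le> t * (norm d + 1)" using tpos by simp
    also have "\<dots> \<le> (dd / (2 * (norm d + 1))) * (norm d + 1)" unfolding t_def
      by (intro mult_right_mono) (auto simp: less_imp_le[OF nd])
    also have "\<dots> = dd / 2" using nd by (simp add: field_simps)
    finally have "t * norm d < dd" using dd by simp
    then have "norm ((p0 + t *\<^sub>R d) - p0) < dd" using tpos by simp
    then have "q \<bullet> ((p0 + t *\<^sub>R d) - p0) \<le> e' * norm ((p0 + t *\<^sub>R d) - p0)"
      using dd pin[OF tpos tlt] by blast
    then have "t * (q \<bullet> d) \<le> t * (e' * norm d)" using tpos by (simp add: algebra_simps)
    then have "q \<bullet> d \<le> e' * norm d" using tpos by simp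
    also have "\<dots> \<le> e" unfolding e'_def using e nd by (simp add: field_simps)
    finally show ?thesis .
  qed
  then show ?thesis by (meson dense not_le)
qed

lemma SUB:
  assumes "u \<in> second_subdiff \<theta> zb vb 0"
  shows "u \<in> parallel_subspace (subdiff \<theta> zb)"
proof -
  let ?G = "{(x, y). y \<in> subdiff \<theta> x}"
  let ?K = "subdiff \<theta> zb"
  from assms obtain xs vs where xv: "\<forall>k. xs k \<in> ?G \<and> vs k \<in> regular_normal ?G (xs k)"
    "xs \<longlonglongrightarrow> (zb, vb)" "vs \<longlonglongrightarrow> (u, 0)"
    unfolding second_subdiff_def coderiv_def limiting_normal_def by auto
  have orth: "u \<bullet> x = 0" if W: "\<forall>v\<in>?K. (v - vb) \<bullet> x = 0" for x
  proof -
    have half: "\<forall>\<^sub>F k in sequentially. fst (vs k) \<bullet> d \<le> 0" if Wd: "\<forall>v\<in>?K. (v - vb) \<bullet> d = 0" for d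
    proof -
      obtain \<eta> where eta: "\<eta> > 0" "\<forall>z v t. v \<in> subdiff \<theta> z \<longrightarrow> norm (z - zb) < \<eta> \<longrightarrow> 0 < t \<longrightarrow> t < \<eta> \<longrightarrow> v \<in> subdiff \<theta> (z + t *\<^sub>R d)"
        using KL[OF Wd] by blast
      have "(\<lambda>k. fst (xs k)) \<longlonglongrightarrow> zb" using tendsto_fst[OF xv(2)] by simp
      then have ev: "\<forall>\<^sub>F k in sequentially. norm (fst (xs k) - zb) < \<eta>"
        using eta(1) by (auto simp: tendsto_iff dist_norm)
      show ?thesis
      proof (rule eventually_mono[OF ev])
        fix k assume k: "norm (fst (xs k) - zb) < \<eta>"
        obtain z v where zv: "xs k = (z, v)" by (cases "xs k")
        obtain uk yk where uy: "vs k = (uk, yk)" by (cases "vs k")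
        have "xs k \<in> ?G" using conjunct1[OF spec[OF xv(1), of k]] .
        then have vz: "v \<in> subdiff \<theta> z" using zv by simp
        have "(uk, yk) \<bullet> (d, 0) \<le> 0"
        proof (rule reg_dir[of _ ?G "(z, v)" \<eta>])
          show "(uk, yk) \<in> regular_normal ?G (z, v)" using xv(1) zv uy by metis
          show "\<eta> > 0" by (rule eta(1))
          fix t :: real assume t: "0 < t" "t < \<eta>"
          have "v \<in> subdiff \<theta> (z + t *\<^sub>R d)" using eta(2) vz k zv t by auto
          then show "(z, v) + t *\<^sub>R (d, 0) \<in> ?G" by simp
        qed
        then show "fst (vs k) \<bullet> d \<le> 0" using uy by simp
      qed
    qed
    have W': "\<forall>v\<in>?K. (v - vb) \<bullet> (- x) = 0" using W by simp
    have "\<forall>\<^sub>F k in sequentially. fst (vs k) \<bullet> x = 0"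
      using eventually_conj[OF half[OF W] half[OF W']] by (rule eventually_mono) auto
    then have "(\<lambda>k. fst (vs k) \<bullet> x) \<longlonglongrightarrow> 0" by (rule tendsto_eventually)
    moreover have "(\<lambda>k. fst (vs k) \<bullet> x) \<longlonglongrightarrow> u \<bullet> x"
      using tendsto_inner[OF tendsto_fst[OF xv(3)] tendsto_const] by simp
    ultimately show ?thesis using LIMSEQ_unique by metis
  qed
  define D where "D = {v - vb | v. v \<in> ?K - {vb}}"
  obtain y z where yz: "y \<in> span D" "\<And>w. w \<in> span D \<Longrightarrow> orthogonal z w" "u = y + z"
    using orthogonal_subspace_decomp_exists[of D u] by blast
  have "\<forall>v\<in>?K. (v - vb) \<bullet> z = 0"
  proof
    fix v assume v: "v \<in> ?K"
    have "v - vb \<in> span D"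
    proof (cases "v = vb")
      case True then show ?thesis by (simp add: span_zero)
    next
      case False then show ?thesis using v unfolding D_def by (intro span_base) auto
    qed
    then show "(v - vb) \<bullet> z = 0" using yz(2) by (metis orthogonal_def inner_commute)
  qed
  then have uz: "u \<bullet> z = 0" by (rule orth)
  have yz0: "y \<bullet> z = 0" using yz(2)[OF yz(1)] by (metis orthogonal_def inner_commute)
  have "z \<bullet> z = 0" using uz yz0 yz(3) by (simp add: inner_add_left)
  then have "z = 0" by simp
  then have uspan: "u \<in> span D" using yz by simp
  have aff: "affine hull ?K = {vb + w | w. w \<in> span {x - vb | x. x \<in> ?K - {vb}}}"
    by (rule affine_hull_span[OF vbK])
  have "vb + u \<in> affine hull ?K" using aff uspan unfolding D_def by blast
  moreover have "vb \<in> affine hull ?K" using vbK by (simp add: hull_inc)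
  ultimately show ?thesis unfolding parallel_subspace_def by force
qed

end

end


lemma subdiff_mono:
  assumes "v \<in> subdiff \<theta> z" "v' \<in> subdiff \<theta> z'"
  shows "(v - v') \<bullet> (z - z') \<ge> 0"
proof -
  obtain Z where Z: "\<theta> z = ereal Z" "\<And>x. ereal (Z + v \<bullet> (x - z)) \<le> \<theta> x" using subdiffD[OF assms(1)] by blast
  obtain Z' where Z': "\<theta> z' = ereal Z'" "\<And>x. ereal (Z' + v' \<bullet> (x - z')) \<le> \<theta> x" using subdiffD[OF assms(2)] by blast
  have "Z + v \<bullet> (z' - z) \<le> Z'" using Z(2)[of z'] Z'(1) by simp
  moreover have "Z' + v' \<bullet> (z - z') \<le> Z" using Z'(2)[of z] Z(1) by simp
  ultimately show ?thesis by (simp add: inner_diff_left inner_diff_right algebra_simps)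
qed

lemma subdiff_convex: "convex (subdiff \<theta> z)"
proof (rule convexI)
  fix v1 v2 and a b :: real
  assume v: "v1 \<in> subdiff \<theta> z" "v2 \<in> subdiff \<theta> z" and ab: "0 \<le> a" "0 \<le> b" "a + b = 1"
  obtain Z where Z: "\<theta> z = ereal Z" "\<And>x. ereal (Z + v1 \<bullet> (x - z)) \<le> \<theta> x" using subdiffD[OF v(1)] by blast
  obtain Z2 where Z2: "\<theta> z = ereal Z2" "\<And>x. ereal (Z2 + v2 \<bullet> (x - z)) \<le> \<theta> x" using subdiffD[OF v(2)] by blast
  have ZZ: "Z2 = Z" using Z Z2 by simp
  show "a *\<^sub>R v1 + b *\<^sub>R v2 \<in> subdiff \<theta> z"
  proof (rule subdiffI[where \<theta>=\<theta>, OF Z(1)])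
    fix y
    show "ereal (Z + (a *\<^sub>R v1 + b *\<^sub>R v2) \<bullet> (y - z)) \<le> \<theta> y"
    proof (cases "\<theta> y")
      case (real Y)
      have bdef: "b = 1 - a" using ab(3) by simp
      have "Z + v1 \<bullet> (y - z) \<le> Y" "Z + v2 \<bullet> (y - z) \<le> Y" using Z(2)[of y] Z2(2)[of y] ZZ real by auto
      then have "a * (Z + v1 \<bullet> (y - z)) + b * (Z + v2 \<bullet> (y - z)) \<le> a * Y + b * Y"
        using ab by (intro add_mono mult_left_mono) auto
      moreover have "a * (Z + v1 \<bullet> (y - z)) + b * (Z + v2 \<bullet> (y - z)) = Z + (a *\<^sub>R v1 + b *\<^sub>R v2) \<bullet> (y - z)"
        "a * Y + b * Y = Y" unfolding bdef by (simp_all add: inner_add_left algebra_simps)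
      ultimately have "Z + (a *\<^sub>R v1 + b *\<^sub>R v2) \<bullet> (y - z) \<le> Y" by simp
      then show ?thesis using real by simp
    next
      case PInf then show ?thesis by simp
    next
      case MInf then show ?thesis using Z(2)[of y] by simp
    qed
  qed
qed

lemma SUPSET:
  fixes \<theta> :: "'a::euclidean_space \<Rightarrow> ereal"
  assumes vbK: "vb \<in> subdiff \<theta> zb" and u: "u \<in> parallel_subspace (subdiff \<theta> zb)"
  shows "u \<in> second_subdiff \<theta> zb vb 0"
proof -
  let ?K = "subdiff \<theta> zb"
  let ?G = "{(x, y). y \<in> subdiff \<theta> x}"
  obtain p q where pq: "u = p - q" "p \<in> affine hull ?K" "q \<in> affine hull ?K"
    using u unfolding parallel_subspace_def by blast
  have cK: "convex ?K" by (rule subdiff_convex)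
  have "vb \<in> closure (rel_interior ?K)"
    using convex_closure_rel_interior[OF cK] closure_subset vbK by blast
  then obtain f where f: "\<And>n. f n \<in> rel_interior ?K" "f \<longlonglongrightarrow> vb"
    unfolding closure_sequential by blast
  have rn: "(u, 0) \<in> regular_normal ?G (zb, w)" if w: "w \<in> rel_interior ?K" for w
  proof -
    obtain e where e: "e > 0" "ball w e \<inter> affine hull ?K \<subseteq> ?K" "w \<in> ?K"
      using w unfolding rel_interior_ball by blast
    define \<epsilon> where "\<epsilon> = e / (2 * (norm u + 1))"
    have nu: "2 * (norm u + 1) > 0" by (smt (verit) norm_ge_zero)
    have epos: "\<epsilon> > 0" unfolding \<epsilon>_def using e nu by simp
    have "norm (\<epsilon> *\<^sub>R u) < e"
    proof -
      have "norm (\<epsilon> *\<^sub>R u) = \<epsilon> * norm u" using epos by simp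
      also have "\<dots> < \<epsilon> * (2 * (norm u + 1))" using epos by (intro mult_strict_left_mono) (auto, smt (verit) norm_ge_zero)
      also have "\<dots> = e" unfolding \<epsilon>_def using nu by simp
      finally show ?thesis .
    qed
    then have inball: "w + \<epsilon> *\<^sub>R u \<in> ball w e" by (simp add: dist_norm)
    have "w + \<epsilon> *\<^sub>R u \<in> affine hull ?K"
      unfolding pq(1) by (rule mem_affine_3_minus[OF affine_affine_hull hull_inc[OF e(3)] pq(2) pq(3)])
    then have wK: "w + \<epsilon> *\<^sub>R u \<in> ?K" using inball e(2) by blast
    show ?thesis unfolding regular_normal_def
    proof (clarsimp, intro conjI allI impI)
      show "w \<in> ?K" by (rule e(3))
      fix ee :: real assume ee: "ee > 0"
      show "\<exists>d>0. \<forall>a b. b \<in> subdiff \<theta> a \<longrightarrow> norm (a - zb, b - w) < d \<longrightarrow> u \<bullet> (a - zb) \<le> ee * norm (a - zb, b - w)"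
      proof (intro exI[of _ "ee * \<epsilon>"] conjI allI impI)
        show "ee * \<epsilon> > 0" using ee epos by simp
        fix z v assume v: "v \<in> subdiff \<theta> z" and nrm: "norm (z - zb, v - w) < ee * \<epsilon>"
        have "(v - (w + \<epsilon> *\<^sub>R u)) \<bullet> (z - zb) \<ge> 0" by (rule subdiff_mono[OF v wK])
        then have "\<epsilon> * (u \<bullet> (z - zb)) \<le> (v - w) \<bullet> (z - zb)" by (simp add: inner_diff_left algebra_simps)
        also have "\<dots> \<le> norm (v - w) * norm (z - zb)" by (rule norm_cauchy_schwarz)
        also have "\<dots> \<le> (ee * \<epsilon>) * norm (z - zb, v - w)"
          using norm_snd_le[of "v - w" "z - zb"] norm_fst_le[of "z - zb" "v - w"] nrm ee epos
          by (intro mult_mono) auto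
        finally have "\<epsilon> * (u \<bullet> (z - zb)) \<le> \<epsilon> * (ee * norm (z - zb, v - w))" by (simp add: algebra_simps)
        then show "u \<bullet> (z - zb) \<le> ee * norm (z - zb, v - w)" using epos by simp
      qed
    qed
  qed
  have A: "\<forall>k. (zb, f k) \<in> ?G \<and> (u, 0) \<in> regular_normal ?G (zb, f k)"
    using rn f(1) rel_interior_subset by auto
  have B: "(\<lambda>n. (zb, f n)) \<longlonglongrightarrow> (zb, vb)" by (intro tendsto_intros f(2))
  have C: "(\<lambda>n. (u, 0::'a)) \<longlonglongrightarrow> (u, - 0)" by simp
  have ex: "\<exists>xs vs. (\<forall>k. xs k \<in> ?G \<and> vs k \<in> regular_normal ?G (xs k)) \<and> xs \<longlonglongrightarrow> (zb, vb) \<and> vs \<longlonglongrightarrow> (u, - 0)"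
    apply (rule exI[of _ "\<lambda>n. (zb, f n)"], rule exI[of _ "\<lambda>n. (u, 0)"])
    using A B C by blast
  have "(u, - 0) \<in> limiting_normal ?G (zb, vb)"
    unfolding limiting_normal_def using ex vbK by simp
  then show ?thesis unfolding second_subdiff_def coderiv_def by simp
qed


theorem mainTheorem6:
  fixes \<theta> :: "real ^ 'm \<Rightarrow> ereal" and zb vb :: "real ^ 'm"
  assumes "piecewise_linear \<theta>"
    and "zb \<in> dom_subdiff \<theta>"
    and "vb \<in> subdiff \<theta> zb"
  shows "second_subdiff \<theta> zb vb 0 = parallel_subspace (subdiff \<theta> zb)"
proof -
  from assms(1) obtain P where P: "finite P" "edom \<theta> = \<Union>P"
      "\<forall>C\<in>P. polyhedron C \<and> (\<exists>a b. \<forall>x\<in>C. \<theta> x = ereal (a \<bullet> x + b))"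
    and cvx: "convex_efun \<theta>" unfolding piecewise_linear_def by blast
  have "\<forall>C\<in>P. \<exists>ab. \<forall>x\<in>C. \<theta> x = ereal (fst ab \<bullet> x + snd ab)" using P(3) by fastforce
  then obtain g where g: "\<forall>C\<in>P. \<forall>x\<in>C. \<theta> x = ereal (fst (g C) \<bullet> x + snd (g C))"
    by (rule bchoice[elim_format]) blast
  define A where "A = (\<lambda>C. fst (g C))"
  define B where "B = (\<lambda>C. snd (g C))"
  have affP: "\<forall>C\<in>P. \<forall>y\<in>C. \<theta> y = ereal (A C \<bullet> y + B C)" using g unfolding A_def B_def by blast
  have polyP: "\<forall>C\<in>P. polyhedron C" using P(3) by blast
  obtain T where T: "\<theta> zb = ereal T" using subdiffD[OF assms(3)] by blast
  obtain \<delta> where d: "\<delta> > 0" "\<forall>h. norm h < \<delta> \<longrightarrow> (\<forall>s r. 0<s \<longrightarrow> s\<le>1 \<longrightarrow>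
     (\<theta> (zb + s *\<^sub>R h) \<le> ereal (T + s*r) \<longleftrightarrow> \<theta> (zb + h) \<le> ereal (T + r)))"
    using hom[OF P(1) polyP affP P(2) cvx T] by blast
  show ?thesis
  proof
    show "second_subdiff \<theta> zb vb 0 \<subseteq> parallel_subspace (subdiff \<theta> zb)"
      using SUB[OF P(1) polyP affP P(2) cvx T assms(3) d(1) d(2)] by blast
    show "parallel_subspace (subdiff \<theta> zb) \<subseteq> second_subdiff \<theta> zb vb 0"
      using SUPSET[OF assms(3)] by blast
  qed
qed

end
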